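(* For any directed hypergraph with a directed hypergraph cellular sheaf (any charge $q\in\mathbb R$, stalk dimension $d$) such that every $D_u$ is positive definite, the normalized Directed Sheaf Hypergraph Laplacian $L^{\vec{\mathcal F}}_N$ is positive semidefinite.
   Context: A directed hypergraph is $\mathcal H=(V,E)$ with $n=|V|$, $m=|E|$, each hyperedge $e\in E$ a nonempty subset of $V$ partitioned into disjoint sets $T(e)$ (tail) and $H(e)$ (head) with $e=T(e)\cup H(e)$; $\delta_e:=|e|$. A directed hypergraph cellular sheaf with charge $q\in\mathbb R$ and stalk dimension $d$ consists of: for each $e\in E$, $u\in V$, the scalar $\mathcal S^{(q)}_{u\trianglelefteq e}=1$ if $u\in H(e)$, $=e^{-2\pi\mathbf i q}$ if $u\in T(e)$, $=0$ otherwise; for each incidence $u\in e$ a real matrix $\mathcal F_{u\trianglelefteq e}\in\mathbb R^{d\times d}$ and $\vec{\mathcal F}_{u\trianglelefteq e}:=\mathcal S^{(q)}_{u\trianglelefteq e}\mathcal F_{u\trianglelefteq e}$. Let $B^{(q)}\in\mathbb C^{md\times nd}$ have $d\times d$ block $(e,u)$ equal to $\vec{\mathcal F}_{u\trianglelefteq e}$ if $u\in e$ and $0$ otherwise; $D_E=\mathrm{diag}(\delta_1I_d,\dots,\delta_mI_d)$; $D_u:=\sum_{e\ni u}\mathcal F_{u\trianglelefteq e}^\top\mathcal F_{u\trianglelefteq e}$; $D_V=\mathrm{diag}(D_1,\dots,D_n)$. $L^{\vec{\mathcal F}}:=D_V-(B^{(q)})^\dagger D_E^{-1}B^{(q)}$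 and $L^{\vec{\mathcal F}}_N:=D_V^{-1/2}L^{\vec{\mathcal F}}D_V^{-1/2}$. *)

theory Defs
  imports "HOL-Analysis.Analysis"
begin

text \<open>Directed hypergraph on vertex set {..<n} with hyperedges indexed by {..<m};
  hyperedge e has tail T e and head H e.\<close>

definition dir_hypergraph :: "nat \<Rightarrow> nat \<Rightarrow> (nat \<Rightarrow> nat set) \<Rightarrow> (nat \<Rightarrow> nat set) \<Rightarrow> bool" where
  "dir_hypergraph n m T H \<longleftrightarrow>
     (\<forall>e<m. T e \<union> H e \<noteq> {} \<and> T e \<inter> H e = {} \<and> T e \<union> H e \<subseteq> {..<n})"

definition hedge :: "(nat \<Rightarrow> nat set) \<Rightarrow> (nat \<Rightarrow> nat set) \<Rightarrow> nat \<Rightarrow> nat set" where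
  "hedge T H e = T e \<union> H e"

definition hdelta :: "(nat \<Rightarrow> nat set) \<Rightarrow> (nat \<Rightarrow> nat set) \<Rightarrow> nat \<Rightarrow> nat" where
  "hdelta T H e = card (hedge T H e)"

definition charge_scalar :: "real \<Rightarrow> (nat \<Rightarrow> nat set) \<Rightarrow> (nat \<Rightarrow> nat set) \<Rightarrow> nat \<Rightarrow> nat \<Rightarrow> complex" where
  "charge_scalar q T H u e =
     (if u \<in> H e then 1
      else if u \<in> T e then exp (- (2 * complex_of_real pi * \<i> * complex_of_real q))
      else 0)"

definition cmat :: "real^'d^'d \<Rightarrow> complex^'d^'d" where
  "cmat A = (\<chi> i j. complex_of_real (A $ i $ j))"

definition cadj :: "complex^'d^'d \<Rightarrow> complex^'d^'d" where
  "cadj A = (\<chi> i j. cnj (A $ j $ i))"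

definition dir_restr ::
  "real \<Rightarrow> (nat \<Rightarrow> nat set) \<Rightarrow> (nat \<Rightarrow> nat set) \<Rightarrow> (nat \<Rightarrow> nat \<Rightarrow> real^'d^'d) \<Rightarrow> nat \<Rightarrow> nat \<Rightarrow> complex^'d^'d" where
  "dir_restr q T H F u e =
     (if u \<in> hedge T H e then (\<chi> i j. charge_scalar q T H u e * cmat (F u e) $ i $ j) else 0)"

definition deg_mat :: "nat \<Rightarrow> (nat \<Rightarrow> nat set) \<Rightarrow> (nat \<Rightarrow> nat set) \<Rightarrow> (nat \<Rightarrow> nat \<Rightarrow> real^'d^'d) \<Rightarrow> nat \<Rightarrow> real^'d^'d" where
  "deg_mat m T H F u = (\<Sum>e\<in>{e. e < m \<and> u \<in> hedge T H e}. transpose (F u e) ** F u e)"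

definition real_pos_def :: "real^'d^'d \<Rightarrow> bool" where
  "real_pos_def A \<longleftrightarrow> transpose A = A \<and> (\<forall>x. x \<noteq> 0 \<longrightarrow> x \<bullet> (A *v x) > 0)"

definition mat_inv_sqrt :: "real^'d^'d \<Rightarrow> real^'d^'d" where
  "mat_inv_sqrt A = (THE S. real_pos_def S \<and> S ** S = matrix_inv A)"

text \<open>Sheaf Laplacian L^F as an n x n block matrix with d x d complex blocks:
  L = D_V - B^dagger D_E^{-1} B.\<close>
definition sheaf_laplacian ::
  "nat \<Rightarrow> real \<Rightarrow> (nat \<Rightarrow> nat set) \<Rightarrow> (nat \<Rightarrow> nat set) \<Rightarrow> (nat \<Rightarrow> nat \<Rightarrow> real^'d^'d) \<Rightarrow> nat \<Rightarrow> nat \<Rightarrow> complex^'d^'d" where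
  "sheaf_laplacian m q T H F u v =
     (if u = v then cmat (deg_mat m T H F u) else 0)
     - (\<Sum>e<m. (\<chi> i j. (1 / of_nat (hdelta T H e)) * (cadj (dir_restr q T H F u e) ** dir_restr q T H F v e) $ i $ j))"

definition norm_sheaf_laplacian ::
  "nat \<Rightarrow> real \<Rightarrow> (nat \<Rightarrow> nat set) \<Rightarrow> (nat \<Rightarrow> nat set) \<Rightarrow> (nat \<Rightarrow> nat \<Rightarrow> real^'d^'d) \<Rightarrow> nat \<Rightarrow> nat \<Rightarrow> complex^'d^'d" where
  "norm_sheaf_laplacian m q T H F u v =
     cmat (mat_inv_sqrt (deg_mat m T H F u)) ** sheaf_laplacian m q T H F u v
       ** cmat (mat_inv_sqrt (deg_mat m T H F v))"

text \<open>Positive semidefiniteness of an n x n block matrix with d x d complex blocks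
  (i.e. of the nd x nd complex matrix): Hermitian and x^* M x >= 0 for all x.\<close>
definition block_psd :: "nat \<Rightarrow> (nat \<Rightarrow> nat \<Rightarrow> complex^'d^'d) \<Rightarrow> bool" where
  "block_psd n M \<longleftrightarrow>
     (\<forall>u<n. \<forall>v<n. M u v = cadj (M v u)) \<and>
     (\<forall>x :: nat \<Rightarrow> complex^'d.
        let Q = (\<Sum>u<n. \<Sum>v<n. \<Sum>i\<in>UNIV. cnj (x u $ i) * ((M u v *v x v) $ i))
        in Im Q = 0 \<and> Re Q \<ge> 0)"

end

theory Submission
  imports Defs
begin


lemma sym_dot:
  fixes A :: "real^'n^'n"
  assumes "transpose A = A"
  shows "x \<bullet> (A *v y) = (A *v x) \<bullet> y"
  by (metis assms dot_lmul_matrix transpose_matrix_vector)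

lemma quad_lemma:
  fixes a b :: real
  assumes "\<forall>t. 2*t*a + t^2*b \<ge> 0"
  shows "a = 0"
proof (rule ccontr)
  assume "a \<noteq> 0"
  define c where "c = \<bar>b\<bar> + 1"
  have c: "c \<ge> 1" unfolding c_def by simp
  define t where "t = -a/c"
  have "2*t*a + t^2*b \<le> -2*a^2/c + a^2*\<bar>b\<bar>/c^2"
  proof -
    have "t^2*b \<le> t^2*\<bar>b\<bar>" by (simp add: mult_left_mono)
    also have "\<dots> = a^2*\<bar>b\<bar>/c^2" unfolding t_def by (simp add: power_divide)
    finally show ?thesis unfolding t_def by (simp add: power2_eq_square)
  qed
  also have "a^2*\<bar>b\<bar>/c^2 \<le> a^2/c"
  proof -
    have "\<bar>b\<bar> \<le> c" unfolding c_def by simp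
    hence "a^2*\<bar>b\<bar> \<le> a^2*c" by (simp add: mult_left_mono)
    thus ?thesis using c by (simp add: power2_eq_square divide_simps)
  qed
  hence "-2*a^2/c + a^2*\<bar>b\<bar>/c^2 \<le> - (a^2/c)" by simp
  also have "- (a^2/c) < 0" using \<open>a \<noteq> 0\<close> c by simp
  finally show False using assms by (metis not_less)
qed

lemma eig_exists:
  fixes A :: "real^'n^'n"
  assumes sym: "transpose A = A" and W: "subspace W" and inv: "\<forall>x\<in>W. A *v x \<in> W"
    and ne: "W \<noteq> {0}"
  shows "\<exists>v\<in>W. norm v = 1 \<and> A *v v = (v \<bullet> (A *v v)) *\<^sub>R v"
proof -
  define K where "K = W \<inter> sphere 0 1"
  have cK: "compact K" unfolding K_def
    using closed_Int_compact[OF closed_subspace[OF W] compact_sphere] by simp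
  obtain w where w: "w \<in> W" "w \<noteq> 0" using ne W subspace_0 by blast
  have "w /\<^sub>R norm w \<in> K" unfolding K_def using w W by (simp add: subspace_scale)
  hence Kne: "K \<noteq> {}" by blast
  define f where "f x = x \<bullet> (A *v x)" for x
  have "continuous_on K f" unfolding f_def
    by (intro continuous_intros linear_continuous_on matrix_vector_mul_linear)
  then obtain v where v: "v \<in> K" and vmax: "\<forall>y\<in>K. f y \<le> f v"
    using continuous_attains_sup[OF cK Kne] by blast
  define l where "l = f v"
  have vW: "v \<in> W" and nv: "norm v = 1" using v unfolding K_def by auto
  have vv: "v \<bullet> v = 1" using nv by (simp add: norm_eq_1)
  have bound: "f u \<le> l * (u \<bullet> u)" if u: "u \<in> W" for u
  proof (cases "u = 0")
    case True then show ?thesis by (simp add: f_def)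
  next
    case False
    let ?u = "u /\<^sub>R norm u"
    have "?u \<in> K" unfolding K_def using u W False by (simp add: subspace_scale)
    hence "f ?u \<le> l" using vmax l_def by blast
    moreover have "f ?u = f u / (norm u)^2"
      unfolding f_def by (simp add: matrix_vector_mult_scaleR power2_eq_square field_simps)
    moreover have "u \<bullet> u = (norm u)^2" by (simp add: power2_norm_eq_inner)
    ultimately show ?thesis using False
      by (metis mult_right_mono zero_le_power2 nonzero_eq_divide_eq norm_eq_zero power_not_zero)
  qed
  define g where "g x = l *\<^sub>R x - A *v x" for x
  have gsym: "x \<bullet> g y = g x \<bullet> y" for x y
    unfolding g_def by (simp add: inner_diff_right inner_diff_left sym_dot[OF sym])
  have gadd: "g (x + c *\<^sub>R y) = g x + c *\<^sub>R g y" for x y c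
    unfolding g_def by (simp add: algebra_simps)
  have qpos: "u \<bullet> g u \<ge> 0" if "u \<in> W" for u
    using bound[OF that] unfolding g_def f_def by (simp add: inner_diff_right)
  have qv: "v \<bullet> g v = 0" unfolding g_def l_def f_def using vv by (simp add: inner_diff_right)
  define z where "z = g v"
  have zW: "z \<in> W" unfolding z_def g_def using W vW inv
    by (simp add: subspace_diff subspace_scale)
  have "\<forall>t. 2*t*(z \<bullet> z) + t^2*(z \<bullet> g z) \<ge> 0"
  proof
    fix t
    have "v + t *\<^sub>R z \<in> W" using W vW zW by (simp add: subspace_add subspace_scale)
    hence "0 \<le> (v + t *\<^sub>R z) \<bullet> g (v + t *\<^sub>R z)" by (rule qpos)
    also have "\<dots> = v \<bullet> g v + t * (v \<bullet> g z) + t * (z \<bullet> g v) + t^2 * (z \<bullet> g z)"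
      by (simp add: gadd inner_add_left inner_add_right power2_eq_square algebra_simps)
    also have "\<dots> = 2*t*(z \<bullet> z) + t^2*(z \<bullet> g z)"
      using qv gsym[of v z] unfolding z_def by (simp add: inner_commute)
    finally show "2*t*(z \<bullet> z) + t^2*(z \<bullet> g z) \<ge> 0" .
  qed
  hence "z \<bullet> z = 0" by (rule quad_lemma)
  hence "z = 0" by simp
  hence "A *v v = l *\<^sub>R v" unfolding z_def g_def by simp
  moreover have "l = v \<bullet> (A *v v)" unfolding l_def f_def ..
  ultimately show ?thesis using vW nv by blast
qed



definition eigbasis :: "real^'n^'n \<Rightarrow> (real^'n) set \<Rightarrow> (real^'n) set \<Rightarrow> bool" where
  "eigbasis A W B \<longleftrightarrow> finite B \<and> B \<subseteq> W \<and> (\<forall>b\<in>B. norm b = 1 \<and> A *v b = (b \<bullet> (A *v b)) *\<^sub>R b)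
     \<and> (\<forall>b\<in>B. \<forall>c\<in>B. b \<noteq> c \<longrightarrow> b \<bullet> c = 0) \<and> (\<forall>x\<in>W. x = (\<Sum>b\<in>B. (b \<bullet> x) *\<^sub>R b))"

lemma spectral_sub:
  fixes A :: "real^'n^'n"
  assumes sym: "transpose A = A"
  shows "subspace W \<Longrightarrow> (\<forall>x\<in>W. A *v x \<in> W) \<Longrightarrow> \<exists>B. eigbasis A W B"
proof (induct "dim W" arbitrary: W rule: less_induct)
  case less
  show ?case
  proof (cases "W = {0}")
    case True
    then show ?thesis unfolding eigbasis_def by (rule_tac x="{}" in exI) auto
  next
    case False
    then obtain v where vW: "v \<in> W" and nv: "norm v = 1" and ev: "A *v v = (v \<bullet> (A *v v)) *\<^sub>R v"
      using eig_exists[OF sym less.prems(1) less.prems(2)] by blast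
    have vv: "v \<bullet> v = 1" using nv by (simp add: norm_eq_1)
    define W' where "W' = {x\<in>W. v \<bullet> x = 0}"
    have sW': "subspace W'" unfolding W'_def using less.prems(1)
      by (auto simp: subspace_def inner_add_right)
    have iW': "\<forall>x\<in>W'. A *v x \<in> W'"
    proof
      fix x assume "x \<in> W'"
      hence x: "x \<in> W" "v \<bullet> x = 0" unfolding W'_def by auto
      have "v \<bullet> (A *v x) = (A *v v) \<bullet> x" by (rule sym_dot[OF sym])
      also have "\<dots> = 0" using x(2) by (subst ev) simp
      finally show "A *v x \<in> W'" unfolding W'_def using x less.prems(2) by auto
    qed
    have "W' \<subset> W" unfolding W'_def using vW vv by (metis (mono_tags, lifting) mem_Collect_eq subsetI psubsetI zero_neq_one)
    hence "span W' \<subset> span W" using sW' less.prems(1) by (metis span_eq_iff)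
    hence "dim W' < dim W" by (rule dim_psubset)
    then obtain B' where B': "eigbasis A W' B'" using less.hyps sW' iW' by blast
    have vB': "v \<notin> B'" using B' vv unfolding eigbasis_def W'_def by auto
    have "eigbasis A W (insert v B')"
      unfolding eigbasis_def
    proof (intro conjI ballI impI)
      show "finite (insert v B')" using B' unfolding eigbasis_def by auto
      show "insert v B' \<subseteq> W" using B' vW unfolding eigbasis_def W'_def by auto
    next
      fix b assume "b \<in> insert v B'"
      thus "norm b = 1" using B' nv unfolding eigbasis_def by auto
      show "A *v b = (b \<bullet> (A *v b)) *\<^sub>R b" using B' ev \<open>b \<in> insert v B'\<close> unfolding eigbasis_def by auto
    next
      fix b c assume "b \<in> insert v B'" "c \<in> insert v B'" "b \<noteq> c"
      thus "b \<bullet> c = 0" using B' unfolding eigbasis_def W'_def by (auto simp: inner_commute)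
    next
      fix x assume x: "x \<in> W"
      define x' where "x' = x - (v \<bullet> x) *\<^sub>R v"
      have "x' \<in> W'" unfolding W'_def x'_def using x vW less.prems(1) vv
        by (auto simp: subspace_diff subspace_scale inner_diff_right)
      hence "x' = (\<Sum>b\<in>B'. (b \<bullet> x') *\<^sub>R b)" using B' unfolding eigbasis_def by blast
      also have "\<dots> = (\<Sum>b\<in>B'. (b \<bullet> x) *\<^sub>R b)"
      proof (rule sum.cong)
        fix b assume "b \<in> B'"
        hence "b \<bullet> v = 0" using B' unfolding eigbasis_def W'_def by (auto simp: inner_commute)
        thus "(b \<bullet> x') *\<^sub>R b = (b \<bullet> x) *\<^sub>R b" unfolding x'_def by (simp add: inner_diff_right)
      qed simp
      finally have "x = (v \<bullet> x) *\<^sub>R v + (\<Sum>b\<in>B'. (b \<bullet> x) *\<^sub>R b)" unfolding x'_def by (simp add: algebra_simps)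
      also have "\<dots> = (\<Sum>b\<in>insert v B'. (b \<bullet> x) *\<^sub>R b)"
        using B' vB' unfolding eigbasis_def by simp
      finally show "x = (\<Sum>b\<in>insert v B'. (b \<bullet> x) *\<^sub>R b)" .
    qed
    thus ?thesis by blast
  qed
qed

lemma spectral:
  fixes A :: "real^'n^'n"
  assumes sym: "transpose A = A"
  shows "\<exists>B. eigbasis A UNIV B"
  using spectral_sub[OF sym, of UNIV] by simp



definition outer :: "real^'n \<Rightarrow> real^'n^'n" where
  "outer b = (\<chi> i j. b$i * b$j)"

definition Mg :: "(real^'n) set \<Rightarrow> (real^'n \<Rightarrow> real) \<Rightarrow> real^'n^'n" where
  "Mg B g = (\<Sum>b\<in>B. g b *\<^sub>R outer b)"

lemma Mg_comp_entry: "finite B \<Longrightarrow> Mg B g $ i $ j = (\<Sum>b\<in>B. g b * (b$i * b$j))"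
  unfolding Mg_def outer_def by simp

lemma Mg_apply:
  assumes "finite B"
  shows "Mg B g *v x = (\<Sum>b\<in>B. (g b * (b \<bullet> x)) *\<^sub>R b)"
proof -
  have "(Mg B g *v x) $ i = (\<Sum>b\<in>B. (g b * (b \<bullet> x)) *\<^sub>R b) $ i" for i
  proof -
    have "(Mg B g *v x) $ i = (\<Sum>j\<in>UNIV. (\<Sum>b\<in>B. g b * (b$i * b$j)) * x$j)"
      by (simp add: matrix_vector_mult_def Mg_comp_entry[OF assms])
    also have "\<dots> = (\<Sum>b\<in>B. (\<Sum>j\<in>UNIV. g b * (b$i * b$j) * x$j))"
      by (simp add: sum_distrib_right sum.swap[of _ UNIV B])
    also have "\<dots> = (\<Sum>b\<in>B. g b * (b \<bullet> x) * b$i)"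
      by (rule sum.cong) (simp_all add: inner_vec_def sum_distrib_left sum_distrib_right mult_ac)
    finally show ?thesis by simp
  qed
  thus ?thesis by (simp add: vec_eq_iff)
qed

lemma Mg_transpose:
  assumes "finite B" shows "transpose (Mg B g) = Mg B g"
proof -
  have "transpose (Mg B g) $ i $ j = Mg B g $ i $ j" for i j
    unfolding transpose_def vec_lambda_beta Mg_comp_entry[OF assms]
    by (rule sum.cong) (simp_all add: mult.commute)
  thus ?thesis by (simp add: vec_eq_iff)
qed

lemma eigbasis_fin: "eigbasis A W B \<Longrightarrow> finite B" unfolding eigbasis_def by blast
lemma eigbasis_exp: "eigbasis A W B \<Longrightarrow> x \<in> W \<Longrightarrow> x = (\<Sum>b\<in>B. (b \<bullet> x) *\<^sub>R b)" unfolding eigbasis_def by blast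
lemma eigbasis_norm: "eigbasis A W B \<Longrightarrow> b \<in> B \<Longrightarrow> b \<bullet> b = 1" unfolding eigbasis_def using norm_eq_1 by blast
lemma eigbasis_nz: "eigbasis A W B \<Longrightarrow> b \<in> B \<Longrightarrow> b \<noteq> 0" using eigbasis_norm by fastforce
lemma eigbasis_ev: "eigbasis A W B \<Longrightarrow> b \<in> B \<Longrightarrow> A *v b = (b \<bullet> (A *v b)) *\<^sub>R b" unfolding eigbasis_def by blast
lemma eigbasis_orth: "eigbasis A W B \<Longrightarrow> b \<in> B \<Longrightarrow> c \<in> B \<Longrightarrow> b \<noteq> c \<Longrightarrow> b \<bullet> c = 0" unfolding eigbasis_def by blast

lemma eigbasis_dot:
  assumes "eigbasis A W B" "c \<in> B"
  shows "c \<bullet> (\<Sum>b\<in>B. f b *\<^sub>R b) = f c"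
proof -
  have fin: "finite B" and cc: "c \<bullet> c = 1" using assms eigbasis_fin eigbasis_norm by auto
  have "c \<bullet> (\<Sum>b\<in>B. f b *\<^sub>R b) = (\<Sum>b\<in>B. f b * (c \<bullet> b))" by (simp add: inner_sum_right)
  also have "\<dots> = (\<Sum>b\<in>B. if b = c then f b else 0)"
    by (rule sum.cong) (use assms cc eigbasis_orth[OF assms(1)] in \<open>auto simp: inner_commute\<close>)
  also have "\<dots> = f c" using fin assms(2) by simp
  finally show ?thesis .
qed

lemma Mg_dot:
  assumes "eigbasis A W B" "c \<in> B"
  shows "c \<bullet> (Mg B g *v x) = g c * (c \<bullet> x)"
  using eigbasis_dot[OF assms] Mg_apply[OF eigbasis_fin[OF assms(1)]] by simp

lemma Mg_comp:
  assumes "eigbasis A W B"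
  shows "Mg B g *v (Mg B h *v x) = Mg B (\<lambda>b. g b * h b) *v x"
proof -
  have fin: "finite B" using assms eigbasis_fin by blast
  show ?thesis unfolding Mg_apply[OF fin, of g] Mg_apply[OF fin, of "\<lambda>b. g b * h b"]
    by (rule sum.cong) (simp_all add: Mg_dot[OF assms])
qed

lemma Mg_one:
  assumes "eigbasis A UNIV B" "\<forall>b\<in>B. g b = 1"
  shows "Mg B g *v x = x"
proof -
  have fin: "finite B" using assms eigbasis_fin by blast
  have "Mg B g *v x = (\<Sum>b\<in>B. (b \<bullet> x) *\<^sub>R b)" unfolding Mg_apply[OF fin] using assms(2) by simp
  also have "\<dots> = x" by (rule sym, rule eigbasis_exp[OF assms(1)]) simp
  finally show ?thesis .
qed

lemma A_Mg:
  fixes A :: "real^'n^'n"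
  assumes sym: "transpose A = A" and B: "eigbasis A UNIV B"
  shows "A *v x = Mg B (\<lambda>b. b \<bullet> (A *v b)) *v x"
proof -
  have fin: "finite B" using B eigbasis_fin by blast
  have "A *v x = (\<Sum>b\<in>B. (b \<bullet> (A *v x)) *\<^sub>R b)" using eigbasis_exp[OF B] by blast
  also have "\<dots> = (\<Sum>b\<in>B. ((b \<bullet> (A *v b)) * (b \<bullet> x)) *\<^sub>R b)"
  proof (rule sum.cong)
    fix b assume b: "b \<in> B"
    have "b \<bullet> (A *v x) = (A *v b) \<bullet> x" by (rule sym_dot[OF sym])
    also have "\<dots> = (b \<bullet> (A *v b)) * (b \<bullet> x)" using eigbasis_ev[OF B b]
      by (metis inner_scaleR_left)
    finally show "(b \<bullet> (A *v x)) *\<^sub>R b = ((b \<bullet> (A *v b)) * (b \<bullet> x)) *\<^sub>R b" by simp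
  qed simp
  also have "\<dots> = Mg B (\<lambda>b. b \<bullet> (A *v b)) *v x" by (simp add: Mg_apply[OF fin])
  finally show ?thesis .
qed

lemma eigbasis_zero:
  assumes "eigbasis A UNIV B" "x \<noteq> 0"
  shows "\<exists>b\<in>B. b \<bullet> x \<noteq> 0"
proof (rule ccontr)
  assume "\<not> ?thesis"
  hence h: "(\<Sum>b\<in>B. (b \<bullet> x) *\<^sub>R b) = 0" by simp
  have e: "x = (\<Sum>b\<in>B. (b \<bullet> x) *\<^sub>R b)" by (rule eigbasis_exp[OF assms(1)]) simp
  from e h have "x = 0" by (rule trans)
  thus False using assms(2) by contradiction
qed

lemma Mg_pd:
  assumes B: "eigbasis A UNIV B" and pos: "\<forall>b\<in>B. g b > 0"
  shows "real_pos_def (Mg B g)"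
proof -
  have fin: "finite B" using B eigbasis_fin by blast
  have "x \<bullet> (Mg B g *v x) > 0" if x0: "x \<noteq> 0" for x
  proof -
    obtain c where c: "c \<in> B" "c \<bullet> x \<noteq> 0" using eigbasis_zero[OF B x0] by blast
    have eq: "x \<bullet> (Mg B g *v x) = (\<Sum>b\<in>B. g b * (b \<bullet> x)^2)"
      by (simp add: Mg_apply[OF fin] inner_sum_right power2_eq_square inner_commute mult_ac)
    have "0 < g c * (c \<bullet> x)^2" using pos c by simp
    also have "\<dots> \<le> (\<Sum>b\<in>B. g b * (b \<bullet> x)^2)"
      by (rule member_le_sum) (use c fin pos in \<open>auto intro: less_imp_le\<close>)
    finally show ?thesis using eq by simp
  qed
  thus ?thesis unfolding real_pos_def_def using Mg_transpose[OF fin] by blast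
qed

lemma inv_sqrt_exists:
  fixes A :: "real^'n^'n"
  assumes A: "real_pos_def A"
  shows "\<exists>S. real_pos_def S \<and> S ** S = matrix_inv A"
proof -
  have sym: "transpose A = A" using A unfolding real_pos_def_def by auto
  obtain B where B: "eigbasis A UNIV B" using spectral[OF sym] by blast
  define l where "l b = b \<bullet> (A *v b)" for b
  have lpos: "\<forall>b\<in>B. l b > 0"
  proof
    fix b assume "b \<in> B"
    hence "b \<noteq> 0" using B eigbasis_nz by blast
    thus "l b > 0" using A unfolding real_pos_def_def l_def by auto
  qed
  have Aeq: "A *v y = Mg B l *v y" for y unfolding l_def by (rule A_Mg[OF sym B])
  define S where "S = Mg B (\<lambda>b. 1 / sqrt (l b))"
  have Spd: "real_pos_def S" unfolding S_def by (rule Mg_pd[OF B]) (use lpos in auto)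
  define P where "P = S ** S"
  have PA: "P ** A = mat 1"
  proof -
    have "(P ** A) *v x = mat 1 *v x" for x
    proof -
      have "(P ** A) *v x = S *v (S *v (A *v x))" unfolding P_def by (simp add: matrix_vector_mul_assoc matrix_mul_assoc)
      also have "\<dots> = Mg B (\<lambda>b. 1 / sqrt (l b) * (1 / sqrt (l b) * l b)) *v x"
        unfolding S_def Aeq Mg_comp[OF B] by simp
      also have "\<dots> = x" by (rule Mg_one[OF B]) (use lpos in \<open>auto simp: field_simps\<close>)
      finally show ?thesis by simp
    qed
    thus ?thesis by (simp add: matrix_eq)
  qed
  have AP: "A ** P = mat 1"
  proof -
    have "(A ** P) *v x = mat 1 *v x" for x
    proof -
      have "(A ** P) *v x = A *v (S *v (S *v x))" unfolding P_def by (simp add: matrix_vector_mul_assoc matrix_mul_assoc)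
      also have "\<dots> = Mg B (\<lambda>b. l b * (1 / sqrt (l b) * (1 / sqrt (l b)))) *v x"
        unfolding S_def Aeq Mg_comp[OF B] by simp
      also have "\<dots> = x" by (rule Mg_one[OF B]) (use lpos in \<open>auto simp: field_simps\<close>)
      finally show ?thesis by simp
    qed
    thus ?thesis by (simp add: matrix_eq)
  qed
  have "matrix_inv A = P"
  proof -
    have "A ** matrix_inv A = mat 1 \<and> matrix_inv A ** A = mat 1"
      unfolding matrix_inv_def by (rule someI[of _ P]) (use AP PA in auto)
    hence "P ** (A ** matrix_inv A) = P" by simp
    thus ?thesis by (simp add: matrix_mul_assoc PA)
  qed
  thus ?thesis using Spd P_def by auto
qed

lemma pd_sqrt_unique:
  fixes S R :: "real^'n^'n"
  assumes S: "real_pos_def S" and R: "real_pos_def R" and eq: "S ** S = R ** R"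
  shows "S = R"
proof -
  have sS: "transpose S = S" and sR: "transpose R = R" using S R unfolding real_pos_def_def by auto
  define X where "X = S - R"
  have sX: "transpose X = X" unfolding X_def using sS sR
    by (simp add: vec_eq_iff transpose_def)
  obtain B where B: "eigbasis X UNIV B" using spectral[OF sX] by blast
  have SSR: "S *v (S *v u) = R *v (R *v u)" for u using eq by (simp add: matrix_vector_mul_assoc)
  have key: "S *v (X *v u) + X *v (R *v u) = 0" for u
    unfolding X_def using SSR[of u] by (simp add: matrix_vector_mult_diff_rdistrib matrix_vector_mult_diff_distrib)
  have Xb: "X *v b = 0" if b: "b \<in> B" for b
  proof -
    define \<mu> where "\<mu> = b \<bullet> (X *v b)"
    have ev: "X *v b = \<mu> *\<^sub>R b" using eigbasis_ev[OF B b] unfolding \<mu>_def .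
    have "b \<noteq> 0" using B b eigbasis_nz by blast
    hence p1: "b \<bullet> (S *v b) > 0" and p2: "b \<bullet> (R *v b) > 0" using S R unfolding real_pos_def_def by auto
    have "0 = b \<bullet> (S *v (X *v b)) + b \<bullet> (X *v (R *v b))" using key[of b] by (metis inner_add_right inner_zero_right)
    also have "b \<bullet> (X *v (R *v b)) = (X *v b) \<bullet> (R *v b)" by (rule sym_dot[OF sX])
    finally have "0 = \<mu> * (b \<bullet> (S *v b)) + \<mu> * (b \<bullet> (R *v b))"
      by (simp add: ev matrix_vector_mult_scaleR)
    hence "\<mu> * (b \<bullet> (S *v b) + b \<bullet> (R *v b)) = 0" by (simp add: algebra_simps)
    hence "\<mu> = 0" using p1 p2 by simp
    thus ?thesis using ev by simp
  qed
  have "X *v x = 0" for x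
  proof -
    have "X *v x = (\<Sum>b\<in>B. (b \<bullet> (X *v x)) *\<^sub>R b)" using eigbasis_exp[OF B] by blast
    also have "\<dots> = 0"
      by (rule sum.neutral) (simp add: sym_dot[OF sX] Xb)
    finally show ?thesis .
  qed
  hence "X = 0" by (simp add: matrix_eq)
  thus ?thesis unfolding X_def by simp
qed

lemma mat_inv_sqrt_sym:
  fixes A :: "real^'n^'n"
  assumes A: "real_pos_def A"
  shows "transpose (mat_inv_sqrt A) = mat_inv_sqrt A"
proof -
  obtain S where S: "real_pos_def S \<and> S ** S = matrix_inv A" using inv_sqrt_exists[OF A] by blast
  have "real_pos_def (mat_inv_sqrt A) \<and> mat_inv_sqrt A ** mat_inv_sqrt A = matrix_inv A"
    unfolding mat_inv_sqrt_def
    by (rule theI[of _ S]) (use S pd_sqrt_unique in metis)+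
  thus ?thesis unfolding real_pos_def_def by auto
qed



definition cinner :: "complex^'d \<Rightarrow> complex^'d \<Rightarrow> complex" where
  "cinner a b = (\<Sum>i\<in>UNIV. cnj (a$i) * b$i)"

lemma cinner_adj: "cinner x (A *v y) = cinner (cadj A *v x) y"
proof -
  have "cinner x (A *v y) = (\<Sum>i\<in>UNIV. \<Sum>j\<in>UNIV. cnj (x$i) * A$i$j * y$j)"
    by (simp add: cinner_def matrix_vector_mult_def sum_distrib_left mult.assoc)
  also have "\<dots> = (\<Sum>j\<in>UNIV. \<Sum>i\<in>UNIV. cnj (x$i) * A$i$j * y$j)" by (rule sum.swap)
  also have "\<dots> = cinner (cadj A *v x) y"
    by (simp add: cinner_def matrix_vector_mult_def cadj_def sum_distrib_right sum_distrib_left mult_ac)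
  finally show ?thesis .
qed

lemma cadj_cadj[simp]: "cadj (cadj A) = A"
  by (simp add: cadj_def vec_eq_iff)

lemma cinner_sum_left: "cinner (\<Sum>u\<in>U. f u) b = (\<Sum>u\<in>U. cinner (f u) b)"
  by (simp add: cinner_def sum_distrib_right sum.swap[of _ UNIV U] cong: sum.cong)

lemma cinner_sum_right: "cinner a (\<Sum>u\<in>U. f u) = (\<Sum>u\<in>U. cinner a (f u))"
  by (simp add: cinner_def sum_distrib_left sum.swap[of _ UNIV U] cong: sum.cong)

lemma cinner_diff_right: "cinner a (b - c) = cinner a b - cinner a c"
  by (simp add: cinner_def right_diff_distrib sum_subtractf)

lemma cinner_scale_right: "cinner a (c *s b) = c * cinner a b"
  by (simp add: cinner_def sum_distrib_left mult_ac)

lemma cinner_zero_right[simp]: "cinner a 0 = 0"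
  by (simp add: cinner_def)

lemma cinner_self: "cinner w w = of_real ((norm w)^2)"
proof -
  have "(norm w)^2 = (\<Sum>i\<in>UNIV. (cmod (w$i))^2)"
    unfolding norm_vec_def L2_set_def by (simp add: sum_nonneg)
  hence "of_real ((norm w)^2) = (\<Sum>i\<in>UNIV. of_real ((cmod (w$i))^2) :: complex)" by simp
  also have "\<dots> = cinner w w" unfolding cinner_def
    by (rule sum.cong) (simp_all add: complex_norm_square mult.commute del: of_real_power)
  finally show ?thesis by simp
qed

lemma msum_apply: "(\<Sum>e\<in>E. M e) *v (w :: 'a::comm_ring_1^'n) = (\<Sum>e\<in>E. M e *v w)"
  by (induct E rule: infinite_finite_induct) (simp_all add: matrix_vector_mult_add_rdistrib)

lemma scal_apply: "(\<chi> i j. c * (P :: complex^'n^'m)$i$j) *v w = c *s (P *v w)"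
  by (simp add: vec_eq_iff matrix_vector_mult_def sum_distrib_left mult.assoc)

lemma cmat_sum: "cmat (\<Sum>e\<in>E. M e) = (\<Sum>e\<in>E. cmat (M e))"
  by (induct E rule: infinite_finite_induct) (simp_all add: cmat_def vec_eq_iff)

lemma cmat_mult: "cmat (A ** B) = cmat A ** cmat B"
  by (simp add: cmat_def vec_eq_iff matrix_matrix_mult_def)

lemma cmat_transpose: "cmat (transpose A) = cadj (cmat A)"
  by (simp add: cmat_def cadj_def vec_eq_iff transpose_def)

lemma cadj_cmat_sym: "transpose A = A \<Longrightarrow> cadj (cmat A) = cmat A"
  by (metis cmat_transpose)

lemma cadj_mult: "cadj (A ** B) = cadj B ** cadj A"
  by (simp add: cadj_def vec_eq_iff matrix_matrix_mult_def mult.commute)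

lemma norm_scal:
  fixes w :: "complex^'d"
  assumes "cmod s = 1"
  shows "norm (s *s w) = norm w"
  unfolding norm_vec_def L2_set_def by (simp add: norm_mult assms)

lemma charge_norm: "u \<in> hedge T H e \<Longrightarrow> cmod (charge_scalar q T H u e) = 1"
  unfolding charge_scalar_def hedge_def by (auto simp: norm_exp_eq_Re)



lemma L_apply:
  "sheaf_laplacian m q T H F u v *v w =
     (if u = v then cmat (deg_mat m T H F u) *v w else 0)
     - (\<Sum>e<m. (1 / of_nat (hdelta T H e)) *s (cadj (dir_restr q T H F u e) *v (dir_restr q T H F v e *v w)))"
  unfolding sheaf_laplacian_def matrix_vector_mult_diff_rdistrib msum_apply scal_apply matrix_vector_mul_assoc
  by simp

lemma L_form:
  "cinner a (sheaf_laplacian m q T H F u v *v b) =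
     (if u = v then cinner a (cmat (deg_mat m T H F u) *v b) else 0)
     - (\<Sum>e<m. (1 / of_nat (hdelta T H e)) * cinner (dir_restr q T H F u e *v a) (dir_restr q T H F v e *v b))"
  unfolding L_apply cinner_diff_right cinner_sum_right cinner_scale_right cinner_adj[of a "cadj _"] cadj_cadj
  by simp

lemma D_form:
  "cinner a (cmat (deg_mat m T H F u) *v a) =
     of_real (\<Sum>e\<in>{e. e < m \<and> u \<in> hedge T H e}. (norm (cmat (F u e) *v a))^2)"
proof -
  have "cmat (deg_mat m T H F u) *v a = (\<Sum>e\<in>{e. e < m \<and> u \<in> hedge T H e}. cadj (cmat (F u e)) *v (cmat (F u e) *v a))"
    unfolding deg_mat_def cmat_sum cmat_mult cmat_transpose msum_apply matrix_vector_mul_assoc ..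
  hence "cinner a (cmat (deg_mat m T H F u) *v a) = (\<Sum>e\<in>{e. e < m \<and> u \<in> hedge T H e}. cinner (cmat (F u e) *v a) (cmat (F u e) *v a))"
    by (simp add: cinner_sum_right cinner_adj[of a "cadj _"])
  thus ?thesis by (simp add: cinner_self)
qed

lemma R_norm:
  assumes "u \<in> hedge T H e"
  shows "norm (dir_restr q T H F u e *v a) = norm (cmat (F u e) *v a)"
  using assms unfolding dir_restr_def by (simp add: scal_apply norm_scal charge_norm)

lemma R_zero: "u \<notin> hedge T H e \<Longrightarrow> dir_restr q T H F u e = 0"
  unfolding dir_restr_def by simp

lemma Q_form:
  assumes G: "dir_hypergraph n m T H"
  shows "(\<Sum>u<n. \<Sum>v<n. cinner (y u) (sheaf_laplacian m q T H F u v *v y v)) =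
    of_real (\<Sum>e<m. (\<Sum>u\<in>hedge T H e. (norm (cmat (F u e) *v y u))^2)
       - (1 / real (hdelta T H e)) * (norm (\<Sum>u\<in>hedge T H e. dir_restr q T H F u e *v y u))^2)"
proof -
  have sub: "hedge T H e \<subseteq> {..<n}" if "e < m" for e
    using G that unfolding dir_hypergraph_def hedge_def by auto
  define W where "W e = (\<Sum>u\<in>hedge T H e. dir_restr q T H F u e *v y u)" for e
  have W: "(\<Sum>u<n. dir_restr q T H F u e *v y u) = W e" if "e < m" for e
    unfolding W_def
    by (rule sum.mono_neutral_right) (use sub[OF that] in \<open>auto simp: R_zero\<close>)
  have "(\<Sum>u<n. \<Sum>v<n. cinner (y u) (sheaf_laplacian m q T H F u v *v y v)) =
     (\<Sum>u<n. cinner (y u) (cmat (deg_mat m T H F u) *v y u))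
     - (\<Sum>u<n. \<Sum>v<n. \<Sum>e<m. (1 / of_nat (hdelta T H e)) * cinner (dir_restr q T H F u e *v y u) (dir_restr q T H F v e *v y v))"
    unfolding L_form sum_subtractf by (simp add: sum.delta sum.delta')
  also have "(\<Sum>u<n. \<Sum>v<n. \<Sum>e<m. (1 / of_nat (hdelta T H e)) * cinner (dir_restr q T H F u e *v y u) (dir_restr q T H F v e *v y v))
     = (\<Sum>e<m. (1 / of_nat (hdelta T H e)) * cinner (W e) (W e))"
  proof -
    have "(\<Sum>u<n. \<Sum>v<n. \<Sum>e<m. (1 / of_nat (hdelta T H e)) * cinner (dir_restr q T H F u e *v y u) (dir_restr q T H F v e *v y v))
      = (\<Sum>e<m. \<Sum>u<n. \<Sum>v<n. (1 / of_nat (hdelta T H e)) * cinner (dir_restr q T H F u e *v y u) (dir_restr q T H F v e *v y v))"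
      by (simp add: sum.swap[of _ "{..<m}"])
    also have "\<dots> = (\<Sum>e<m. (1 / of_nat (hdelta T H e)) * cinner (W e) (W e))"
    proof (rule sum.cong)
      fix e assume "e \<in> {..<m}"
      hence e: "e < m" by simp
      show "(\<Sum>u<n. \<Sum>v<n. (1 / of_nat (hdelta T H e)) * cinner (dir_restr q T H F u e *v y u) (dir_restr q T H F v e *v y v))
        = (1 / of_nat (hdelta T H e)) * cinner (W e) (W e)"
        unfolding W[OF e, symmetric] cinner_sum_left cinner_sum_right sum_distrib_left by (rule sum.swap)
    qed simp
    finally show ?thesis .
  qed
  also have "(\<Sum>u<n. cinner (y u) (cmat (deg_mat m T H F u) *v y u)) =
      of_real (\<Sum>e<m. \<Sum>u\<in>hedge T H e. (norm (cmat (F u e) *v y u))^2)"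
  proof -
    have "(\<Sum>u<n. cinner (y u) (cmat (deg_mat m T H F u) *v y u)) =
      of_real (\<Sum>u<n. \<Sum>e\<in>{e. e < m \<and> u \<in> hedge T H e}. (norm (cmat (F u e) *v y u))^2)"
      by (simp add: D_form)
    also have "(\<Sum>u<n. \<Sum>e\<in>{e. e < m \<and> u \<in> hedge T H e}. (norm (cmat (F u e) *v y u))^2)
      = (\<Sum>u<n. \<Sum>e<m. if u \<in> hedge T H e then (norm (cmat (F u e) *v y u))^2 else 0)"
    proof (rule sum.cong)
      fix u
      have "{e. e < m \<and> u \<in> hedge T H e} = {e\<in>{..<m}. u \<in> hedge T H e}" by auto
      thus "(\<Sum>e\<in>{e. e < m \<and> u \<in> hedge T H e}. (norm (cmat (F u e) *v y u))^2)
        = (\<Sum>e<m. if u \<in> hedge T H e then (norm (cmat (F u e) *v y u))^2 else 0)"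
        by (simp only: sum.inter_filter[OF finite_lessThan])
    qed simp
    also have "\<dots> = (\<Sum>e<m. \<Sum>u<n. if u \<in> hedge T H e then (norm (cmat (F u e) *v y u))^2 else 0)"
      by (rule sum.swap)
    also have "\<dots> = (\<Sum>e<m. \<Sum>u\<in>hedge T H e. (norm (cmat (F u e) *v y u))^2)"
    proof (rule sum.cong)
      fix e assume "e \<in> {..<m}"
      hence s: "hedge T H e \<subseteq> {..<n}" using sub by auto
      have "{u\<in>{..<n}. u \<in> hedge T H e} = hedge T H e" using s by auto
      thus "(\<Sum>u<n. if u \<in> hedge T H e then (norm (cmat (F u e) *v y u))^2 else 0)
        = (\<Sum>u\<in>hedge T H e. (norm (cmat (F u e) *v y u))^2)"
        by (simp only: sum.inter_filter[OF finite_lessThan, symmetric])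
    qed simp
    finally show ?thesis .
  qed
  finally show ?thesis
    by (simp add: cinner_self W_def sum_subtractf)
qed



lemma cadj_diff: "cadj (A - B) = cadj A - cadj B"
  by (simp add: cadj_def vec_eq_iff)

lemma cadj_sum: "cadj (\<Sum>e\<in>E. M e) = (\<Sum>e\<in>E. cadj (M e))"
  by (induct E rule: infinite_finite_induct) (simp_all add: cadj_def vec_eq_iff)

lemma cadj_zero[simp]: "cadj 0 = 0"
  by (simp add: cadj_def vec_eq_iff)

lemma cadj_scal: "cadj (\<chi> i j. c * (P :: complex^'n^'n)$i$j) = (\<chi> i j. cnj c * (cadj P)$i$j)"
  by (simp add: cadj_def vec_eq_iff)

lemma L_herm:
  assumes "transpose (deg_mat m T H F u) = deg_mat m T H F u"
  shows "cadj (sheaf_laplacian m q T H F v u) = sheaf_laplacian m q T H F u v"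
proof -
  have c: "cnj (1 / of_nat k :: complex) = 1 / of_nat k" for k by simp
  have d: "cadj (if v = u then cmat (deg_mat m T H F v) else 0) = (if u = v then cmat (deg_mat m T H F u) else 0)"
    using cadj_cmat_sym[OF assms] by auto
  show ?thesis
    unfolding sheaf_laplacian_def cadj_diff cadj_sum cadj_scal c d cadj_mult cadj_cadj ..
qed

lemma edge_ineq:
  assumes G: "dir_hypergraph n m T H" and e: "e < m"
  shows "(1 / real (hdelta T H e)) * (norm (\<Sum>u\<in>hedge T H e. dir_restr q T H F u e *v y u))^2
     \<le> (\<Sum>u\<in>hedge T H e. (norm (cmat (F u e) *v y u))^2)"
proof -
  let ?E = "hedge T H e"
  have fin: "finite ?E" and ne: "?E \<noteq> {}"
    using G e unfolding dir_hypergraph_def hedge_def by (auto intro: finite_subset)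
  have cpos: "card ?E > 0" using fin ne by (simp add: card_gt_0_iff)
  define a where "a u = norm (cmat (F u e) *v y u)" for u
  have "norm (\<Sum>u\<in>?E. dir_restr q T H F u e *v y u) \<le> (\<Sum>u\<in>?E. norm (dir_restr q T H F u e *v y u))"
    by (rule norm_sum)
  also have "\<dots> = (\<Sum>u\<in>?E. a u)" unfolding a_def by (rule sum.cong) (simp_all add: R_norm)
  finally have n1: "norm (\<Sum>u\<in>?E. dir_restr q T H F u e *v y u) \<le> (\<Sum>u\<in>?E. a u)" .
  hence "(norm (\<Sum>u\<in>?E. dir_restr q T H F u e *v y u))^2 \<le> (\<Sum>u\<in>?E. a u)^2"
    by (simp add: power_mono)
  also have "\<dots> \<le> (\<Sum>u\<in>?E. (a u)^2) * card ?E" by (rule sum_squared_le_sum_of_squares)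
  finally have "(norm (\<Sum>u\<in>?E. dir_restr q T H F u e *v y u))^2 \<le> (\<Sum>u\<in>?E. (a u)^2) * card ?E" .
  thus ?thesis using cpos unfolding hdelta_def a_def by (simp add: divide_simps mult.commute)
qed



theorem corollary1:
  fixes n m :: nat and q :: real
    and T H :: "nat \<Rightarrow> nat set"
    and F :: "nat \<Rightarrow> nat \<Rightarrow> real^'d^'d"
  assumes "dir_hypergraph n m T H"
    and "\<forall>u<n. real_pos_def (deg_mat m T H F u)"
  shows "block_psd n (norm_sheaf_laplacian m q T H F)"
proof -
  define S where "S u = mat_inv_sqrt (deg_mat m T H F u)" for u
  define L where "L = sheaf_laplacian m q T H F"
  have Ssym: "transpose (S u) = S u" if "u < n" for u
    unfolding S_def using mat_inv_sqrt_sym assms(2) that by blast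
  have Dsym: "transpose (deg_mat m T H F u) = deg_mat m T H F u" if "u < n" for u
    using assms(2) that unfolding real_pos_def_def by blast
  have M: "norm_sheaf_laplacian m q T H F u v = cmat (S u) ** L u v ** cmat (S v)" for u v
    unfolding norm_sheaf_laplacian_def S_def L_def ..
  have herm: "norm_sheaf_laplacian m q T H F u v = cadj (norm_sheaf_laplacian m q T H F v u)"
    if "u < n" "v < n" for u v
  proof -
    have "cadj (cmat (S v) ** L v u ** cmat (S u)) = cadj (cmat (S u)) ** (cadj (L v u) ** cadj (cmat (S v)))"
      by (simp add: cadj_mult)
    also have "\<dots> = cmat (S u) ** (L u v ** cmat (S v))"
      using cadj_cmat_sym[OF Ssym[OF that(1)]] cadj_cmat_sym[OF Ssym[OF that(2)]] L_herm[OF Dsym[OF that(1)]]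
      unfolding L_def by simp
    finally show ?thesis unfolding M by (simp add: matrix_mul_assoc)
  qed
  have quad: "let Q = (\<Sum>u<n. \<Sum>v<n. \<Sum>i\<in>UNIV. cnj (x u $ i) * ((norm_sheaf_laplacian m q T H F u v *v x v) $ i))
        in Im Q = 0 \<and> Re Q \<ge> 0" for x :: "nat \<Rightarrow> complex^'d"
  proof -
    define y where "y u = cmat (S u) *v x u" for u
    have "(\<Sum>u<n. \<Sum>v<n. \<Sum>i\<in>UNIV. cnj (x u $ i) * ((norm_sheaf_laplacian m q T H F u v *v x v) $ i))
      = (\<Sum>u<n. \<Sum>v<n. cinner (y u) (L u v *v y v))"
    proof (rule sum.cong[OF refl], rule sum.cong[OF refl])
      fix u v assume "u \<in> {..<n}" "v \<in> {..<n}"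
      hence u: "u < n" by simp
      have "(\<Sum>i\<in>UNIV. cnj (x u $ i) * ((norm_sheaf_laplacian m q T H F u v *v x v) $ i))
          = cinner (x u) (cmat (S u) *v (L u v *v y v))"
        unfolding cinner_def M y_def by (simp add: matrix_vector_mul_assoc matrix_mul_assoc)
      also have "\<dots> = cinner (y u) (L u v *v y v)"
        unfolding cinner_adj y_def cadj_cmat_sym[OF Ssym[OF u]] ..
      finally show "(\<Sum>i\<in>UNIV. cnj (x u $ i) * ((norm_sheaf_laplacian m q T H F u v *v x v) $ i))
          = cinner (y u) (L u v *v y v)" .
    qed
    also have "\<dots> = of_real (\<Sum>e<m. (\<Sum>u\<in>hedge T H e. (norm (cmat (F u e) *v y u))^2)
       - (1 / real (hdelta T H e)) * (norm (\<Sum>u\<in>hedge T H e. dir_restr q T H F u e *v y u))^2)"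
      unfolding L_def by (rule Q_form[OF assms(1)])
    finally have Qeq: "(\<Sum>u<n. \<Sum>v<n. \<Sum>i\<in>UNIV. cnj (x u $ i) * ((norm_sheaf_laplacian m q T H F u v *v x v) $ i))
      = of_real (\<Sum>e<m. (\<Sum>u\<in>hedge T H e. (norm (cmat (F u e) *v y u))^2)
       - (1 / real (hdelta T H e)) * (norm (\<Sum>u\<in>hedge T H e. dir_restr q T H F u e *v y u))^2)" .
    have "0 \<le> (\<Sum>e<m. (\<Sum>u\<in>hedge T H e. (norm (cmat (F u e) *v y u))^2)
       - (1 / real (hdelta T H e)) * (norm (\<Sum>u\<in>hedge T H e. dir_restr q T H F u e *v y u))^2)"
      by (rule sum_nonneg) (use edge_ineq[OF assms(1)] in force)
    thus ?thesis unfolding Let_def Qeq by simp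
  qed
  show ?thesis unfolding block_psd_def using herm quad by blast
qed


end
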